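(* Let $K$ be a field and $|\cdot|:K\to R$ a tempered multiplicative generalized seminorm. Then $K$ has tiny balls for $|\cdot|$.
   Context: A halo is a commutative unital semiring with a partial order compatible with $+$ and $\cdot$; an aura is a halo whose semiring is a semifield; positive means $0<1$. A generalized seminorm is a map $|\cdot|:A\to R$ into a positive totally ordered aura with $|0|=0,|1|=1$, $|a+b|\le|a|+|b|$, $|ab|\le|a||b|$; multiplicative if $|ab|=|a||b|$; tempered if $R$ has tempered growth: for every non-zero $P\in\mathbb{N}[X]$ and $x\in R$, ($x^n\le P(n)$ for all $n\in\mathbb{N}$) implies $x\le1$. For $x,a\in A$ with $|a|>0$, $B(x,|a|)=\{z:|z-x|<|a|\}$. $|\cdot|$ has tiny balls if for every $a$ with $|a|>0$: there is $a'$ with $|a'|>0$ and $B(0,|a'|)+B(0,|a'|)\subset B(0,|a|)$; for every $x\in A$ there is $c$ with $|c|>0$ and $xB(0,|c|)\subset B(0,|a|)$; there is $a'$ with $|a'|>0$ and $B(0,|a'|)B(0,|a'|)\subset B(0,|a|)$; there is $a'$ with $|a'|>0$ and $-B(0,|a'|)\subset B(0,|a|)$. *)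

theory Defs
  imports "HOL-Computational_Algebra.Polynomial"
begin

text \<open>A halo: commutative unital semiring with a partial order compatible with + and *.
  The semiring structure and the order are taken from the type class; compatibility is stated.\<close>
definition halo_compat :: "('r::{comm_semiring_1, order}) itself \<Rightarrow> bool" where
  "halo_compat _ \<longleftrightarrow> (\<forall>x y z::'r. x \<le> y \<longrightarrow> x + z \<le> y + z \<and> x * z \<le> y * z)"

definition aura :: "('r::{comm_semiring_1, order}) itself \<Rightarrow> bool" where
  "aura T \<longleftrightarrow> halo_compat T \<and> (\<forall>x::'r. x \<noteq> 0 \<longrightarrow> (\<exists>y. x * y = 1))"

definition pos_tot_aura :: "('r::{comm_semiring_1, linorder}) itself \<Rightarrow> bool" where
  "pos_tot_aura T \<longleftrightarrow> aura T \<and> (0::'r) < 1"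

definition tempered_growth :: "('r::{comm_semiring_1, order}) itself \<Rightarrow> bool" where
  "tempered_growth _ \<longleftrightarrow>
     (\<forall>(P::nat poly) (x::'r). P \<noteq> 0 \<longrightarrow>
        (\<forall>n::nat. x ^ n \<le> poly (map_poly of_nat P) (of_nat n)) \<longrightarrow> x \<le> 1)"

definition gen_seminorm :: "('a::comm_ring_1 \<Rightarrow> 'r::{comm_semiring_1, linorder}) \<Rightarrow> bool" where
  "gen_seminorm f \<longleftrightarrow> pos_tot_aura TYPE('r) \<and> f 0 = 0 \<and> f 1 = 1 \<and>
     (\<forall>a b. f (a + b) \<le> f a + f b) \<and> (\<forall>a b. f (a * b) \<le> f a * f b)"

definition multiplicative_gs :: "('a::comm_ring_1 \<Rightarrow> 'r::{comm_semiring_1, linorder}) \<Rightarrow> bool" where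
  "multiplicative_gs f \<longleftrightarrow> gen_seminorm f \<and> (\<forall>a b. f (a * b) = f a * f b)"

definition tempered_gs :: "('a::comm_ring_1 \<Rightarrow> 'r::{comm_semiring_1, linorder}) \<Rightarrow> bool" where
  "tempered_gs f \<longleftrightarrow> gen_seminorm f \<and> tempered_growth TYPE('r)"

definition gs_ball :: "('a::comm_ring_1 \<Rightarrow> 'r::{comm_semiring_1, linorder}) \<Rightarrow> 'a \<Rightarrow> 'a \<Rightarrow> 'a set" where
  "gs_ball f x a = {z. f (z - x) < f a}"

definition tiny_balls :: "('a::comm_ring_1 \<Rightarrow> 'r::{comm_semiring_1, linorder}) \<Rightarrow> bool" where
  "tiny_balls f \<longleftrightarrow> (\<forall>a. 0 < f a \<longrightarrow>
     (\<exists>a'. 0 < f a' \<and> (\<forall>z\<in>gs_ball f 0 a'. \<forall>w\<in>gs_ball f 0 a'. z + w \<in> gs_ball f 0 a)) \<and>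
     (\<forall>x. \<exists>c. 0 < f c \<and> (\<forall>z\<in>gs_ball f 0 c. x * z \<in> gs_ball f 0 a)) \<and>
     (\<exists>a'. 0 < f a' \<and> (\<forall>z\<in>gs_ball f 0 a'. \<forall>w\<in>gs_ball f 0 a'. z * w \<in> gs_ball f 0 a)) \<and>
     (\<exists>a'. 0 < f a' \<and> (\<forall>z\<in>gs_ball f 0 a'. - z \<in> gs_ball f 0 a)))"

end

theory Submission
  imports Defs
begin

theorem corollary4p8:
  fixes f :: "'k::field \<Rightarrow> 'r::{comm_semiring_1, linorder}"
  assumes "tempered_gs f" and "multiplicative_gs f"
  shows "tiny_balls f"
proof -
  have H: "\<And>x y z::'r. x \<le> y \<Longrightarrow> x+z \<le> y+z \<and> x*z \<le> y*z"
    and one: "(0::'r) < 1" and f0: "f 0 = 0" and f1: "f 1 = 1"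
    and tri: "\<And>a b. f (a + b) \<le> f a + f b"
    and mult: "\<And>a b. f (a * b) = f a * f b"
    and temp: "\<And>(P::nat poly) (x::'r). P \<noteq> 0 \<Longrightarrow>
        (\<forall>n::nat. x ^ n \<le> poly (map_poly of_nat P) (of_nat n)) \<Longrightarrow> x \<le> 1"
  proof -
    have g: "gen_seminorm f" and m: "\<forall>a b. f (a * b) = f a * f b"
      and tg: "tempered_growth TYPE('r)"
      using assms unfolding tempered_gs_def multiplicative_gs_def by auto
    have pa: "pos_tot_aura TYPE('r)" and "f 0 = 0" "f 1 = 1"
      "\<forall>a b. f (a + b) \<le> f a + f b" using g unfolding gen_seminorm_def by auto
    moreover have "\<forall>x y z::'r. x \<le> y \<longrightarrow> x+z \<le> y+z \<and> x*z \<le> y*z" "(0::'r) < 1"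
      using pa unfolding pos_tot_aura_def aura_def halo_compat_def by auto
    moreover have "\<forall>(P::nat poly) (x::'r). P \<noteq> 0 \<longrightarrow>
        (\<forall>n::nat. x ^ n \<le> poly (map_poly of_nat P) (of_nat n)) \<longrightarrow> x \<le> 1"
      using tg unfolding tempered_growth_def by simp
    ultimately show "\<And>x y z::'r. x \<le> y \<Longrightarrow> x+z \<le> y+z \<and> x*z \<le> y*z"
      and "(0::'r) < 1" and "f 0 = 0" and "f 1 = 1"
      and "\<And>a b. f (a + b) \<le> f a + f b"
      and "\<And>a b. f (a * b) = f a * f b"
      and "\<And>(P::nat poly) (x::'r). P \<noteq> 0 \<Longrightarrow>
        (\<forall>n::nat. x ^ n \<le> poly (map_poly of_nat P) (of_nat n)) \<Longrightarrow> x \<le> 1"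
      using m by simp_all
  qed
  have nn: "\<And>z::'r. 0 \<le> z" proof -
    fix z :: 'r show "0 \<le> z" using H[of 0 1 z] one by simp
  qed
  have addm: "\<And>x y z::'r. x \<le> y \<Longrightarrow> x+z \<le> y+z" using H by blast
  have mulm: "\<And>x y z::'r. x \<le> y \<Longrightarrow> x*z \<le> y*z" using H by blast
  have mulm2: "\<And>x y z::'r. x \<le> y \<Longrightarrow> z*x \<le> z*y" using H by (simp add: mult.commute)
  have smul: "\<And>x y z w::'r. x < y \<Longrightarrow> z*w = 1 \<Longrightarrow> x*z < y*z"
  proof -
    fix x y z w :: 'r assume a: "x < y" "z*w = 1"
    have "x*z \<le> y*z" using a mulm by auto
    moreover have "x*z \<noteq> y*z"
    proof
      assume "x*z = y*z"
      then have "x*z*w = y*z*w" by simp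
      then have "x = y" using a(2) by (simp add: mult.assoc)
      then show False using a by simp
    qed
    ultimately show "x*z < y*z" by simp
  qed
  have finv: "\<And>x. x \<noteq> 0 \<Longrightarrow> f x * f (inverse x) = 1"
    by (simp add: mult[symmetric] f1)
  have fpos: "\<And>x. x \<noteq> 0 \<Longrightarrow> 0 < f x"
  proof -
    fix x :: 'k assume "x \<noteq> 0"
    then have "f x * f (inverse x) = 1" by (rule finv)
    then have "f x \<noteq> 0" by auto
    then show "0 < f x" using nn[of "f x"] by simp
  qed
  have fnz: "\<And>x. 0 < f x \<Longrightarrow> x \<noteq> 0" using f0 by auto
  have fpow: "\<And>t n. f (t ^ n) = f t ^ n"
  proof -
    fix t :: 'k and n :: nat show "f (t ^ n) = f t ^ n"
      by (induction n) (simp_all add: f1 mult)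
  qed
  have fm1: "f (-1) = 1"
  proof -
    have sq: "f (-1) * f (-1) = 1" using mult[of "-1" "-1"] f1 by simp
    show ?thesis
    proof (rule ccontr)
      assume "f (-1) \<noteq> 1"
      then consider "f (-1) < 1" | "1 < f (-1)" using neq_iff by blast
      then show False
      proof cases
        case 1
        have "f (-1) * f (-1) \<le> 1 * f (-1)" using mulm[of "f (-1)" 1 "f (-1)"] 1 by simp
        then show False using sq 1 by simp
      next
        case 2
        have "1 * f (-1) < f (-1) * f (-1)" using smul[OF 2 sq] .
        then show False using sq 2 by simp
      qed
    qed
  qed
  have ball: "\<And>z a. z \<in> gs_ball f 0 a \<longleftrightarrow> f z < f a" by (simp add: gs_ball_def)
  show ?thesis unfolding tiny_balls_def
  proof (intro allI impI conjI)
    fix a :: 'k assume fa: "0 < f a"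
    have anz: "a \<noteq> 0" using fnz fa .
    have fainv: "f a * f (inverse a) = 1" using finv anz .
    show "\<exists>a'. 0 < f a' \<and> (\<forall>z\<in>gs_ball f 0 a'. \<forall>w\<in>gs_ball f 0 a'. z + w \<in> gs_ball f 0 a)"
    proof (cases "\<exists>t. 0 < f t \<and> f t < 1")
      case True
      then obtain t where t: "0 < f t" "f t < 1" by blast
      have tnz: "t \<noteq> 0" using fnz t(1) .
      define x where "x = f (inverse t)"
      have tx: "f t * x = 1" unfolding x_def using finv tnz .
      have x1: "\<not> x \<le> 1"
      proof
        assume "x \<le> 1"
        then have "f t * x \<le> f t * 1" by (rule mulm2)
        then show False using tx t by simp
      qed
      have "\<not> (\<forall>n::nat. x ^ n \<le> poly (map_poly of_nat [:2::nat:]) (of_nat n))"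
      proof
        assume A: "\<forall>n::nat. x ^ n \<le> poly (map_poly of_nat [:2::nat:]) (of_nat n)"
        have P0: "[:2::nat:] \<noteq> 0" by simp
        have "x \<le> 1" using temp[OF P0 A] .
        then show False using x1 by simp
      qed
      moreover have "\<And>n::nat. poly (map_poly of_nat [:2::nat:]) (of_nat n :: 'r) = 2"
        by (simp add: map_poly_pCons)
      ultimately have "\<exists>n::nat. \<not> x ^ n \<le> 2" by simp
      then obtain n :: nat where "\<not> x ^ n \<le> 2" by (elim exE)
      then have xn: "2 < x ^ n" by simp
      define e where "e = t ^ n"
      have fe: "f e * x ^ n = 1" unfolding e_def fpow using tx
        by (simp add: power_mult_distrib[symmetric])
      have fe0: "0 < f e"
      proof -
        have "f e \<noteq> 0" using fe by auto
        then show ?thesis using nn[of "f e"] by simp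
      qed
      have e2: "2 * f e < 1"
      proof (rule ccontr)
        assume "\<not> 2 * f e < 1"
        then have "1 \<le> 2 * f e" by simp
        then have "1 * x ^ n \<le> 2 * f e * x ^ n" by (rule mulm)
        then have "x ^ n \<le> 2" using fe by (simp add: mult.assoc)
        then show False using xn by simp
      qed
      show ?thesis
      proof (intro exI conjI ballI)
        have "0 < f e * f a"
        proof -
          have "(f e * f a) * (x ^ n * f (inverse a)) = (f e * x ^ n) * (f a * f (inverse a))"
            by (simp add: algebra_simps)
          also have "\<dots> = 1" using fe fainv by simp
          finally have "f e * f a \<noteq> 0" by auto
          then show ?thesis using nn[of "f e * f a"] by simp
        qed
        then show "0 < f (e * a)" using mult by simp
        fix z w assume z: "z \<in> gs_ball f 0 (e * a)" and w: "w \<in> gs_ball f 0 (e * a)"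
        have z': "f z \<le> f e * f a" using z by (simp add: ball mult)
        have w': "f w \<le> f e * f a" using w by (simp add: ball mult)
        have "f (z + w) \<le> f z + f w" by (rule tri)
        also have "\<dots> \<le> f e * f a + f w" using addm[OF z', of "f w"] .
        also have "\<dots> \<le> f e * f a + f e * f a" using addm[OF w', of "f e * f a"] by (simp add: add.commute)
        also have "\<dots> = (2 * f e) * f a" by (simp only: mult_2 distrib_right)
        also have "\<dots> < 1 * f a" using smul[OF e2 fainv] .
        finally show "z + w \<in> gs_ball f 0 a" using ball by simp
      qed
    next
      case False
      have triv: "\<And>y. y \<noteq> 0 \<Longrightarrow> f y = 1"
      proof -
        fix y :: 'k assume y: "y \<noteq> 0"
        have p: "f y * f (inverse y) = 1" using finv y .
        have "1 \<le> f y" using False fpos[OF y] by (meson not_less)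
        moreover have "1 \<le> f (inverse y)" using False fpos[of "inverse y"] y by (meson not_less inverse_nonzero_iff_nonzero)
        then have "f y * 1 \<le> f y * f (inverse y)" by (rule mulm2)
        ultimately show "f y = 1" using p by simp
      qed
      have z0: "\<And>z. f z < f a \<Longrightarrow> z = 0"
      proof (rule ccontr)
        fix z assume "f z < f a" "z \<noteq> 0"
        then show False using triv[of z] triv[OF anz] by simp
      qed
      show ?thesis
      proof (intro exI conjI ballI)
        show "0 < f a" by fact
        fix z w assume "z \<in> gs_ball f 0 a" "w \<in> gs_ball f 0 a"
        then have "z = 0" "w = 0" using z0 ball by auto
        then show "z + w \<in> gs_ball f 0 a" using ball f0 fa by simp
      qed
    qed
  next
    fix a :: 'k and x :: 'k assume fa: "0 < f a"
    have anz: "a \<noteq> 0" using fnz fa .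
    show "\<exists>c. 0 < f c \<and> (\<forall>z\<in>gs_ball f 0 c. x * z \<in> gs_ball f 0 a)"
    proof (cases "x = 0")
      case True
      then show ?thesis using f0 f1 fa one ball by (intro exI[of _ 1]) auto
    next
      case False
      have xi: "f x * f (inverse x) = 1" using finv False .
      show ?thesis
      proof (intro exI[of _ "a * inverse x"] conjI ballI)
        show "0 < f (a * inverse x)" using fpos anz False by simp
        fix z assume "z \<in> gs_ball f 0 (a * inverse x)"
        then have "f z < f (a * inverse x)" using ball by simp
        then have "f z < f a * f (inverse x)" using mult by simp
        from smul[OF this xi]
        have "f z * f x < f a * f (inverse x) * f x" .
        also have "\<dots> = f a * (f x * f (inverse x))" by (simp only: ac_simps)
        also have "\<dots> = f a" using xi by simp
        finally have "f z * f x < f a" .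
        then show "x * z \<in> gs_ball f 0 a" using ball mult by (simp add: mult.commute)
      qed
    qed
  next
    fix a :: 'k assume fa: "0 < f a"
    have anz: "a \<noteq> 0" using fnz fa .
    have fainv: "f a * f (inverse a) = 1" using finv anz .
    show "\<exists>a'. 0 < f a' \<and> (\<forall>z\<in>gs_ball f 0 a'. \<forall>w\<in>gs_ball f 0 a'. z * w \<in> gs_ball f 0 a)"
    proof (cases "f a \<le> 1")
      case True
      show ?thesis
      proof (intro exI[of _ a] conjI ballI)
        show "0 < f a" by fact
        fix z w assume "z \<in> gs_ball f 0 a" "w \<in> gs_ball f 0 a"
        then have z: "f z < f a" and w: "f w < f a" using ball by auto
        have "f (z * w) = f z * f w" by (rule mult)
        also have "\<dots> \<le> f z * f a" using mulm2[of "f w" "f a" "f z"] w by simp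
        also have "\<dots> < f a * f a" using smul[OF z fainv] .
        also have "\<dots> \<le> f a * 1" using mulm2 True by blast
        finally show "z * w \<in> gs_ball f 0 a" using ball by simp
      qed
    next
      case False
      show ?thesis
      proof (intro exI[of _ 1] conjI ballI)
        show "0 < f 1" using f1 one by simp
        fix z w assume "z \<in> gs_ball f 0 1" "w \<in> gs_ball f 0 1"
        then have z: "f z < 1" and w: "f w < 1" using ball f1 by auto
        have "f (z * w) = f z * f w" by (rule mult)
        also have "\<dots> \<le> f z * 1" using mulm2[of "f w" 1 "f z"] w by simp
        also have "\<dots> < f a" using z False by simp
        finally show "z * w \<in> gs_ball f 0 a" using ball by simp
      qed
    qed
  next
    fix a :: 'k assume fa: "0 < f a"
    show "\<exists>a'. 0 < f a' \<and> (\<forall>z\<in>gs_ball f 0 a'. - z \<in> gs_ball f 0 a)"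
    proof (intro exI[of _ a] conjI ballI)
      show "0 < f a" by fact
      fix z assume "z \<in> gs_ball f 0 a"
      moreover have "f (- z) = f z" using mult[of "-1" z] fm1 by simp
      ultimately show "- z \<in> gs_ball f 0 a" using ball by simp
    qed
  qed
qed

end
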